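(* Assume (C1) and (C2). For any $u\in\mathcal{D}$ with $u\neq0$, there exists a unique constant $t_0>0$ such that $t_0u\in\mathcal{N}$.
   Context: Fix real numbers $p,q,r$ with $1<p<q$, $\frac p2$ a positive integer, and $r\ge1$, and functions $a,b,c:\mathbb{Z}\to(0,+\infty)$. Conditions: - (C1) There is $b_0>0$ with $b(n)\ge b_0$ for all $n$ and $b(n)\to+\infty$ as $|n|\to\infty$. - (C2) There is $c_0>0$ with $c(n)\le c_0$ for all $n$ and $\sum_n c(n)<+\infty$. Notation and spaces: - $\Delta u(n)=u(n+1)-u(n)$. - $E$ is the set of real sequences $u$ with $\|u\|:=\big(\sum_n[a(n)|\Delta u(n)|^p+b(n)|u(n)|^p]\big)^{1/p}<\infty$. - $\mathcal{D}=\{u\in E:\sum_n c(n)|u(n)|^q\ln|u(n)|^r<+\infty\}$, where terms with $u(n)=0$ are read as $0$. For $u,v\in\mathcal{D}$: $$\langle I'(u),v\rangle=\sum_n[a(n)|\Delta u(n)|^{p-2}\Delta u(n)\Delta v(n)+b(n)|u(n)|^{p-2}u(n)v(n)]-\sum_n c(n)|u(n)|^{q-2}u(n)v(n)\ln|u(n)|^r.$$ $\mathcal{N}=\{u\in\mathcal{D}:u\ne0,\ \langle I'(u),u\rangle=0\}$. *)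

theory Defs
  imports "HOL-Analysis.Analysis"
begin

definition fdiff :: "(int \<Rightarrow> real) \<Rightarrow> int \<Rightarrow> real" where
  "fdiff u n = u (n + 1) - u n"

definition logterm :: "real \<Rightarrow> real \<Rightarrow> real" where
  "logterm r x = (if x = 0 then 0 else ln (\<bar>x\<bar> powr r))"

definition spaceE :: "(int \<Rightarrow> real) \<Rightarrow> (int \<Rightarrow> real) \<Rightarrow> real \<Rightarrow> (int \<Rightarrow> real) set" where
  "spaceE a b p = {u. (\<lambda>n. a n * \<bar>fdiff u n\<bar> powr p + b n * \<bar>u n\<bar> powr p) summable_on UNIV}"

definition spaceD :: "(int \<Rightarrow> real) \<Rightarrow> (int \<Rightarrow> real) \<Rightarrow> (int \<Rightarrow> real) \<Rightarrow> real \<Rightarrow> real \<Rightarrow> real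
    \<Rightarrow> (int \<Rightarrow> real) set" where
  "spaceD a b c p q r = {u \<in> spaceE a b p.
      (\<lambda>n. c n * \<bar>u n\<bar> powr q * logterm r (u n)) summable_on UNIV}"

definition Iprime :: "(int \<Rightarrow> real) \<Rightarrow> (int \<Rightarrow> real) \<Rightarrow> (int \<Rightarrow> real) \<Rightarrow> real \<Rightarrow> real \<Rightarrow> real
    \<Rightarrow> (int \<Rightarrow> real) \<Rightarrow> (int \<Rightarrow> real) \<Rightarrow> real" where
  "Iprime a b c p q r u v =
     (\<Sum>\<^sub>\<infinity>n. a n * \<bar>fdiff u n\<bar> powr (p - 2) * fdiff u n * fdiff v n
            + b n * \<bar>u n\<bar> powr (p - 2) * u n * v n)
   - (\<Sum>\<^sub>\<infinity>n. c n * \<bar>u n\<bar> powr (q - 2) * u n * v n * logterm r (u n))"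

definition nehari :: "(int \<Rightarrow> real) \<Rightarrow> (int \<Rightarrow> real) \<Rightarrow> (int \<Rightarrow> real) \<Rightarrow> real \<Rightarrow> real \<Rightarrow> real
    \<Rightarrow> (int \<Rightarrow> real) set" where
  "nehari a b c p q r = {u \<in> spaceD a b c p q r. u \<noteq> (\<lambda>_. 0) \<and> Iprime a b c p q r u u = 0}"

end

theory Submission
  imports Defs
begin

lemma single_le:
  fixes f :: "int \<Rightarrow> real"
  assumes "f summable_on UNIV" "\<And>n. f n \<ge> 0"
  shows "f n \<le> infsum f UNIV"
proof -
  have "infsum f {n} \<le> infsum f UNIV"
    by (rule infsum_mono_neutral) (auto simp: assms)
  then show ?thesis by simp
qed

lemma pow_sq:
  fixes x p :: real
  assumes "p > 1"
  shows "\<bar>x\<bar> powr (p - 2) * x * x = \<bar>x\<bar> powr p"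
proof (cases "x = 0")
  case True then show ?thesis using assms by simp
next
  case False
  have e2: "\<bar>x\<bar> powr 2 = x * x"
    using False by (simp add: powr_numeral power2_eq_square abs_mult_self_eq)
  have "\<bar>x\<bar> powr (p - 2) * x * x = \<bar>x\<bar> powr (p - 2) * \<bar>x\<bar> powr 2"
    by (simp only: e2 mult.assoc)
  also have "\<dots> = \<bar>x\<bar> powr (p - 2 + 2)" by (rule powr_add[symmetric])
  also have "\<dots> = \<bar>x\<bar> powr p" by simp
  finally show ?thesis .
qed

lemma logterm_scale:
  assumes "t > 0" "x \<noteq> 0"
  shows "logterm r (t * x) = r * ln t + logterm r x"
  using assms by (simp add: logterm_def ln_powr abs_mult ln_mult algebra_simps)

lemma root_unique:
  fixes A C L r e :: real
  assumes "A > 0" "C > 0" "r > 0" "e < 0"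
  shows "\<exists>!t. t > 0 \<and> A * t powr e = r * C * ln t + L"
proof -
  define g where "g t = A * t powr e - r * C * ln t - L" for t
  have mono: "g s < g t" if "0 < t" "t < s" for s t
  proof -
    have "s powr e < t powr e" using that assms by (simp add: powr_less_mono2_neg)
    moreover have "ln t < ln s" using that by simp
    ultimately show ?thesis unfolding g_def using assms
      by (smt (verit) mult_strict_left_mono mult_pos_pos)
  qed
  define t2 where "t2 = exp ((\<bar>A\<bar> + \<bar>L\<bar> + 1) / (r * C))"
  have t2: "t2 \<ge> 1" unfolding t2_def using assms by simp
  have "ln t2 = (\<bar>A\<bar> + \<bar>L\<bar> + 1) / (r * C)" unfolding t2_def by simp
  hence "r * C * ln t2 = \<bar>A\<bar> + \<bar>L\<bar> + 1" using assms by simp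
  moreover have "t2 powr e \<le> t2 powr 0" using t2 assms
    by (intro powr_mono) auto
  hence "t2 powr e \<le> 1" using t2 by simp
  hence "A * t2 powr e \<le> A" using assms by simp
  ultimately have g2: "g t2 < 0" unfolding g_def by linarith
  define B where "B = (\<bar>L\<bar> + 1) / A + 1"
  define t1 where "t1 = B powr (1 / e)"
  have B1: "B > 1" unfolding B_def using assms by simp
  have t1pos: "t1 > 0" unfolding t1_def using B1 by simp
  have "B powr (1 / e) \<le> B powr 0" using B1 assms
    by (intro powr_mono) (auto simp: divide_neg_pos)
  hence "t1 \<le> 1" unfolding t1_def using B1 by simp
  have t1e: "t1 powr e = B" unfolding t1_def using B1 assms by (simp add: powr_powr)
  have "ln t1 \<le> 0" using \<open>t1 \<le> 1\<close> t1pos by simp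
  hence "r * C * ln t1 \<le> 0" using assms by (simp add: mult_nonneg_nonpos)
  moreover have "A * B = \<bar>L\<bar> + 1 + A" unfolding B_def using assms by (simp add: field_simps)
  hence "A * B > \<bar>L\<bar>" using assms by linarith
  ultimately have g1: "g t1 > 0" unfolding g_def t1e by linarith
  have cont: "continuous_on {t1..t2} g" unfolding g_def using t1pos
    by (intro continuous_intros) auto
  obtain t where t: "t \<ge> t1" "t \<le> t2" "g t = 0"
    using IVT2'[of g t2 0 t1, OF _ _ _ cont] g1 g2 \<open>t1 \<le> 1\<close> t2 by force
  have tpos: "t > 0" using t t1pos by simp
  show ?thesis
  proof (rule ex1I[of _ t])
    show "t > 0 \<and> A * t powr e = r * C * ln t + L" using t tpos unfolding g_def by simp
  next
    fix s assume s: "s > 0 \<and> A * s powr e = r * C * ln s + L"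
    hence "g s = 0" unfolding g_def by simp
    then show "s = t" using mono[of s t] mono[of t s] s tpos t by force
  qed
qed

theorem lemma2p6:
  fixes p q r :: real and a b c :: "int \<Rightarrow> real" and u :: "int \<Rightarrow> real"
  assumes "1 < p" and "p < q" and "\<exists>k::nat. k > 0 \<and> p / 2 = real k" and "r \<ge> 1"
    and "\<And>n. a n > 0" and "\<And>n. b n > 0" and "\<And>n. c n > 0"
    and C1: "\<exists>b0>0. \<forall>n. b n \<ge> b0"
    and C1': "\<forall>M. \<exists>N. \<forall>n. \<bar>n\<bar> \<ge> N \<longrightarrow> b n \<ge> M"
    and C2: "\<exists>c0>0. \<forall>n. c n \<le> c0"
    and C2': "c summable_on UNIV"
    and "u \<in> spaceD a b c p q r" and "u \<noteq> (\<lambda>_. 0)"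
  shows "\<exists>!t0. t0 > 0 \<and> (\<lambda>n. t0 * u n) \<in> nehari a b c p q r"
proof -
  note ap = assms(5) and bp = assms(6) and cp = assms(7)
  have p1: "p > 1" and q1: "q > 1" using assms(1,2) by auto
  obtain b0 where b0: "b0 > 0" "\<And>n. b n \<ge> b0" using C1 by auto
  define SE where "SE n = a n * \<bar>fdiff u n\<bar> powr p + b n * \<bar>u n\<bar> powr p" for n
  define f1 where "f1 n = c n * \<bar>u n\<bar> powr q" for n
  define f2 where "f2 n = c n * \<bar>u n\<bar> powr q * logterm r (u n)" for n
  have SEs: "SE summable_on UNIV" using assms(12) unfolding SE_def spaceD_def spaceE_def by auto
  have f2s: "f2 summable_on UNIV" using assms(12) unfolding f2_def spaceD_def by auto
  define A where "A = infsum SE UNIV"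
  define C where "C = infsum f1 UNIV"
  define L where "L = infsum f2 UNIV"
  have SEnn: "SE n \<ge> 0" for n unfolding SE_def using ap[of n] bp[of n]
    by (intro add_nonneg_nonneg mult_nonneg_nonneg) auto
  have SEle: "SE n \<le> A" for n unfolding A_def by (rule single_le[OF SEs SEnn])
  have bu: "b n * \<bar>u n\<bar> powr p \<le> SE n" for n
  proof -
    have "0 \<le> a n * \<bar>fdiff u n\<bar> powr p" using ap[of n] by (intro mult_nonneg_nonneg) auto
    then show ?thesis unfolding SE_def by simp
  qed
  define K where "K = A / b0"
  have uK: "\<bar>u n\<bar> powr p \<le> K" for n
  proof -
    have "b0 * \<bar>u n\<bar> powr p \<le> b n * \<bar>u n\<bar> powr p"
      using b0 by (intro mult_right_mono) auto
    also have "\<dots> \<le> A" using bu SEle order.trans by blast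
    finally show ?thesis unfolding K_def using b0 by (simp add: field_simps)
  qed
  have uq: "\<bar>u n\<bar> powr q \<le> K powr (q / p)" for n
  proof -
    have "\<bar>u n\<bar> powr q = (\<bar>u n\<bar> powr p) powr (q / p)" using p1 by (simp add: powr_powr)
    also have "\<dots> \<le> K powr (q / p)" using uK p1 q1 by (intro powr_mono2) auto
    finally show ?thesis .
  qed
  have f1s: "f1 summable_on UNIV"
  proof (rule summable_on_comparison_test)
    show "(\<lambda>n. K powr (q / p) * c n) summable_on UNIV" by (rule summable_on_cmult_right[OF C2'])
    show "f1 n \<le> K powr (q / p) * c n" for n unfolding f1_def using uq[of n] cp[of n]
      by (simp add: mult.commute mult_left_mono)
    show "0 \<le> f1 n" for n unfolding f1_def using cp[of n] by simp
  qed
  obtain n0 where n0: "u n0 \<noteq> 0" using assms(13) by auto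
  have "0 < b n0 * \<bar>u n0\<bar> powr p" using n0 bp[of n0] by simp
  hence Apos: "A > 0" using bu[of n0] SEle[of n0] by linarith
  have "0 < f1 n0" unfolding f1_def using n0 cp[of n0] by simp
  moreover have "f1 n0 \<le> C" unfolding C_def
    by (rule single_le[OF f1s]) (simp add: f1_def cp less_imp_le)
  ultimately have Cpos: "C > 0" by linarith
  have key: "t > 0 \<Longrightarrow> (\<lambda>n. t * u n) \<in> nehari a b c p q r \<longleftrightarrow>
      A * t powr (p - q) = r * C * ln t + L" for t
  proof -
    assume t: "t > 0"
    define v where "v = (\<lambda>n. t * u n)"
    have fd: "fdiff v n = t * fdiff u n" for n unfolding v_def fdiff_def by (simp add: algebra_simps)
    have sc: "\<bar>t * y\<bar> powr s = t powr s * \<bar>y\<bar> powr s" for y s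
      using t by (simp add: abs_mult powr_mult)
    have T1': "a n * \<bar>fdiff v n\<bar> powr p + b n * \<bar>v n\<bar> powr p = t powr p * SE n" for n
      unfolding SE_def fd by (simp add: sc v_def algebra_simps)
    have T1: "a n * \<bar>fdiff v n\<bar> powr (p - 2) * fdiff v n * fdiff v n
            + b n * \<bar>v n\<bar> powr (p - 2) * v n * v n = t powr p * SE n" for n
    proof -
      have "a n * \<bar>fdiff v n\<bar> powr (p - 2) * fdiff v n * fdiff v n = a n * \<bar>fdiff v n\<bar> powr p"
        using pow_sq[OF p1, of "fdiff v n"] by (metis mult.assoc)
      moreover have "b n * \<bar>v n\<bar> powr (p - 2) * v n * v n = b n * \<bar>v n\<bar> powr p"
        using pow_sq[OF p1, of "v n"] by (metis mult.assoc)
      ultimately show ?thesis using T1'[of n] by linarith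
    qed
    have T2: "c n * \<bar>v n\<bar> powr (q - 2) * v n * v n * logterm r (v n)
        = t powr q * (r * ln t * f1 n + f2 n)" for n
    proof (cases "u n = 0")
      case True then show ?thesis unfolding v_def f1_def f2_def using q1 by simp
    next
      case False
      have vq: "\<bar>v n\<bar> powr q = t powr q * \<bar>u n\<bar> powr q" unfolding v_def by (rule sc)
      have e1: "c n * \<bar>v n\<bar> powr (q - 2) * v n * v n = c n * (t powr q * \<bar>u n\<bar> powr q)"
        using pow_sq[OF q1, of "v n"] vq by (metis mult.assoc)
      have lg: "logterm r (v n) = r * ln t + logterm r (u n)"
        unfolding v_def by (rule logterm_scale[OF t False])
      show ?thesis unfolding f1_def f2_def by (simp only: e1 lg) (simp add: algebra_simps)
    qed
    have T2': "c n * \<bar>v n\<bar> powr q * logterm r (v n) = t powr q * (r * ln t * f1 n + f2 n)" for n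
      using T2[of n] pow_sq[OF q1, of "v n"] by (metis mult.assoc)
    have s1: "(\<lambda>n. r * ln t * f1 n + f2 n) summable_on UNIV"
      by (intro summable_on_add summable_on_cmult_right f1s f2s)
    have vD: "v \<in> spaceD a b c p q r"
      unfolding spaceD_def spaceE_def
      using summable_on_cmult_right[OF SEs, of "t powr p"] summable_on_cmult_right[OF s1, of "t powr q"]
      by (simp add: T1' T2')
    have vnz: "v \<noteq> (\<lambda>_. 0)"
    proof
      assume "v = (\<lambda>_. 0)"
      hence "t * u n0 = 0" unfolding v_def by metis
      thus False using t n0 by simp
    qed
    have IP: "Iprime a b c p q r v v = t powr p * A - t powr q * (r * ln t * C + L)"
    proof -
      have "Iprime a b c p q r v v = infsum (\<lambda>n. t powr p * SE n) UNIV
          - infsum (\<lambda>n. t powr q * (r * ln t * f1 n + f2 n)) UNIV"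
        unfolding Iprime_def by (simp add: T1 T2)
      also have "\<dots> = t powr p * A - t powr q * (r * ln t * C + L)"
        unfolding A_def C_def L_def
        by (simp add: infsum_cmult_right' infsum_add summable_on_cmult_right f1s f2s)
      finally show ?thesis .
    qed
    have tp: "t powr p = t powr (p - q) * t powr q" using t by (simp add: powr_add[symmetric])
    have "Iprime a b c p q r v v = 0 \<longleftrightarrow> t powr q * (A * t powr (p - q)) = t powr q * (r * C * ln t + L)"
      unfolding IP tp by (simp add: algebra_simps)
    also have "\<dots> \<longleftrightarrow> A * t powr (p - q) = r * C * ln t + L" using t by simp
    finally show ?thesis using vD vnz unfolding nehari_def v_def by auto
  qed
  have r0: "r > 0" using assms(4) by simp
  have "p - q < 0" using assms(2) by simp
  from root_unique[OF Apos Cpos r0 this, of L]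
  obtain t where t: "t > 0" "A * t powr (p - q) = r * C * ln t + L"
    and un: "\<And>s. s > 0 \<and> A * s powr (p - q) = r * C * ln s + L \<Longrightarrow> s = t" by metis
  show ?thesis
  proof (rule ex1I[of _ t])
    show "t > 0 \<and> (\<lambda>n. t * u n) \<in> nehari a b c p q r" using t key by auto
  next
    fix s assume "s > 0 \<and> (\<lambda>n. s * u n) \<in> nehari a b c p q r"
    thus "s = t" using key un by auto
  qed
qed

end
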